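(* Let $\mathbf A=(A;\cdot,\to,\leadsto,1)$ be a pseudo-hoop and let $x,y\in A$ be such that $x\vee y=1$. Then $x\cdot y=x\wedge y=y\cdot x$ and $x\to y=x\leadsto y=y$.
   Context: A pseudo-hoop is an algebra $(A;\cdot,\to,\leadsto,1)$ of type $\langle 2,2,2,0\rangle$ such that for all $x,y,z\in A$: $x\cdot 1=x=1\cdot x$; $x\to x=1=x\leadsto x$; $(x\cdot y)\to z=x\to(y\to z)$; $(x\cdot y)\leadsto z=y\leadsto(x\leadsto z)$; and $(x\to y)\cdot x=(y\to x)\cdot y=x\cdot(x\leadsto y)=y\cdot(y\leadsto x)$. Setting $x\le y$ iff $x\to y=1$ gives a partial order with greatest element $1$ in which $x\wedge y=(x\to y)\cdot x$. "$x\vee y=1$" means the supremum of $\{x,y\}$ exists and equals $1$. *)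

theory Defs
  imports Main
begin

text \<open>A pseudo-hoop (A; mult, imp (\<rightarrow>), limp (\<leadsto>), one), carrier = the whole type.\<close>
definition pseudo_hoop ::
  "('a \<Rightarrow> 'a \<Rightarrow> 'a) \<Rightarrow> ('a \<Rightarrow> 'a \<Rightarrow> 'a) \<Rightarrow> ('a \<Rightarrow> 'a \<Rightarrow> 'a) \<Rightarrow> 'a \<Rightarrow> bool" where
  "pseudo_hoop m imp limp one \<longleftrightarrow>
     (\<forall>x. m x one = x \<and> m one x = x) \<and>
     (\<forall>x. imp x x = one \<and> limp x x = one) \<and>
     (\<forall>x y z. imp (m x y) z = imp x (imp y z)) \<and>
     (\<forall>x y z. limp (m x y) z = limp y (limp x z)) \<and>
     (\<forall>x y. m (imp x y) x = m (imp y x) y \<and>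
            m (imp y x) y = m x (limp x y) \<and>
            m x (limp x y) = m y (limp y x))"

definition ph_le :: "('a \<Rightarrow> 'a \<Rightarrow> 'a) \<Rightarrow> 'a \<Rightarrow> 'a \<Rightarrow> 'a \<Rightarrow> bool" where
  "ph_le imp one x y \<longleftrightarrow> imp x y = one"

definition ph_meet :: "('a \<Rightarrow> 'a \<Rightarrow> 'a) \<Rightarrow> ('a \<Rightarrow> 'a \<Rightarrow> 'a) \<Rightarrow> 'a \<Rightarrow> 'a \<Rightarrow> 'a" where
  "ph_meet m imp x y = m (imp x y) x"

definition ph_is_sup :: "('a \<Rightarrow> 'a \<Rightarrow> 'a) \<Rightarrow> 'a \<Rightarrow> 'a \<Rightarrow> 'a \<Rightarrow> 'a \<Rightarrow> bool" where
  "ph_is_sup imp one x y s \<longleftrightarrow>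
     ph_le imp one x s \<and> ph_le imp one y s \<and>
     (\<forall>z. ph_le imp one x z \<and> ph_le imp one y z \<longrightarrow> ph_le imp one s z)"

end

theory Submission
  imports Defs
begin

locale PH =
  fixes m imp limp :: "'a \<Rightarrow> 'a \<Rightarrow> 'a" and one :: 'a
  assumes a1: "\<And>x. m x one = x" and a1': "\<And>x. m one x = x"
  and a2: "\<And>x. imp x x = one" and a2': "\<And>x. limp x x = one"
  and a3: "\<And>x y z. imp (m x y) z = imp x (imp y z)"
  and a4: "\<And>x y z. limp (m x y) z = limp y (limp x z)"
  and a5: "\<And>x y. m (imp x y) x = m (imp y x) y"
  and a6: "\<And>x y. m (imp y x) y = m x (limp x y)"
  and a7: "\<And>x y. m x (limp x y) = m y (limp y x)"
begin
lemma imp_one: "imp x one = one" by (metis a2 a3 a5 a6)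
lemma limp_one: "limp x one = one" by (metis a1 a7 a2' a4)
lemma one_imp: "imp one x = x" by (metis a6 imp_one a1' a1 a7)
lemma one_limp: "limp one x = x" by (metis a1' a6 imp_one)
lemma antisym: "imp a b = one \<Longrightarrow> imp b a = one \<Longrightarrow> a = b" by (metis a1' a5)
lemma prod_le_r: "imp (m a b) b = one" by (simp add: a3 a2 imp_one)
lemma prod_le_l_limp: "limp (m a b) a = one" by (simp add: a4 a2' limp_one)
lemma le_equiv1: "imp a b = one \<Longrightarrow> limp a b = one" by (metis a1' a6 prod_le_l_limp)
lemma le_equiv2: "limp a b = one \<Longrightarrow> imp a b = one" by (metis a1 a6 prod_le_r)
lemma prod_le_l: "imp (m a b) a = one" using le_equiv2 prod_le_l_limp by blast
lemma prod_le_r_limp: "limp (m a b) b = one" using le_equiv1 prod_le_r by blast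

lemma main:
  assumes sup: "\<And>z. imp x z = one \<Longrightarrow> imp y z = one \<Longrightarrow> z = one"
  shows "limp x y = y \<and> imp x y = y"
proof -
  have u1: "imp x (imp (limp x y) y) = one"
    using a3[of x "limp x y" y] a6[of y x] prod_le_r by metis
  have u2: "imp y (imp (limp x y) y) = one"
    using a3[of y "limp x y" y] prod_le_l by metis
  have "imp (limp x y) y = one" using sup u1 u2 by blast
  moreover have "imp y (limp x y) = one"
    using le_equiv2 a4[of x y y] prod_le_r_limp by metis
  ultimately have L: "limp x y = y" using antisym by blast
  have v1: "limp x (limp (imp x y) y) = one"
    using a4[of "imp x y" x y] a5[of x y] prod_le_r_limp le_equiv1 by metis
  have v2: "limp y (limp (imp x y) y) = one"
    using a4[of "imp x y" y y] prod_le_r_limp by metis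
  have "imp (limp (imp x y) y) one = one" by (simp add: imp_one)
  have "limp (imp x y) y = one" using sup v1 v2 le_equiv2 by blast
  moreover have "imp y (imp x y) = one"
    using a3[of y x y] prod_le_l by metis
  ultimately have I: "imp x y = y" using antisym le_equiv2 by blast
  show ?thesis using L I by simp
qed
end

theorem lemma4p1:
  fixes m imp limp :: "'a \<Rightarrow> 'a \<Rightarrow> 'a" and one x y :: 'a
  assumes "pseudo_hoop m imp limp one"
    and "ph_is_sup imp one x y one"
  shows "m x y = ph_meet m imp x y \<and> ph_meet m imp x y = m y x \<and>
         imp x y = limp x y \<and> limp x y = y"
proof -
  interpret PH m imp limp one
    using assms(1) unfolding pseudo_hoop_def by unfold_locales auto
  have sup: "\<And>z. imp x z = one \<Longrightarrow> imp y z = one \<Longrightarrow> z = one"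
    using assms(2) one_imp unfolding ph_is_sup_def ph_le_def by metis
  from main[OF sup] have L: "limp x y = y" and I: "imp x y = y" by auto
  have "ph_meet m imp x y = m y x" unfolding ph_meet_def using I by simp
  moreover have "ph_meet m imp x y = m x y" unfolding ph_meet_def using a5 a6 L by metis
  ultimately show ?thesis using L I by simp
qed

end
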